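(* Consider a $k$-label broadcasting tree with parameter $\theta\in(0,1)$ (see context), and for a vertex $v$ let $X_t^{(i)}(\ell_{T_{\leq t}(v)})=\mathbb{P}(\ell(v)=i\mid \ell_{T_{\leq t}(v)})$ under the uniform prior on $\ell(v)\in[k]$. Then for any $i\neq j\in[k]$ and $t\geq 2$, $$\log\frac{X_t^{(i)}(\ell_{T_{\leq t}(v)})}{X_t^{(j)}(\ell_{T_{\leq t}(v)})}=\log\frac{X_1^{(i)}(\ell_{T_{1}(v)})}{X_1^{(j)}(\ell_{T_{1}(v)})}+\sum_{u\in\mathcal{C}^{\rm u}(v)}\log\frac{1+\frac{k\theta}{1-\theta}X_{t-1}^{(i)}(\ell_{T_{\leq t-1}(u)})}{1+\frac{k\theta}{1-\theta}X_{t-1}^{(j)}(\ell_{T_{\leq t-1}(u)})}.$$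
   Context: $k$-label broadcasting tree: labels lie in $[k]=\{1,\dots,k\}$; conditionally on the label of a vertex $v$, each child $u$ independently has $\ell(u)=\ell(v)$ with probability $\theta+\frac{1-\theta}{k}$ and $\ell(u)=l$ for each $l\in[k]\setminus\{\ell(v)\}$ with probability $\frac{1-\theta}{k}$. Each vertex's children are split into labeled children $\mathcal{C}^{\rm l}(v)$ (label revealed) and unlabeled children $\mathcal{C}^{\rm u}(v)$. $\ell_{T_{\leq t}(v)}$ denotes the revealed labels in the subtree of depth $\leq t$ rooted at $v$, and $\ell_{T_1(v)}$ the revealed labels among the children of $v$. *)

theory Defs
  imports Complex_Main "HOL-Library.FuncSet"
begin

text \<open>A finite rooted tree. Each child of a vertex carries its revealed label
  (Some l: labeled child, label l revealed) or None (unlabeled child).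
  The root's own label is never revealed.\<close>
datatype tree = Node "(nat option \<times> tree) list"

fun children :: "tree \<Rightarrow> (nat option \<times> tree) list" where
  "children (Node cs) = cs"

text \<open>Vertices of the subtree of depth at most t, as paths of child indices from the root.\<close>
fun verts :: "nat \<Rightarrow> tree \<Rightarrow> nat list set" where
  "verts 0 _ = {[]}"
| "verts (Suc t) (Node cs) =
     insert [] (\<Union>n<length cs. (Cons n) ` verts t (snd (cs ! n)))"

fun obs :: "tree \<Rightarrow> nat list \<Rightarrow> nat option" where
  "obs (Node cs) [] = None"
| "obs (Node cs) (n # p) =
     (if n < length cs then (if p = [] then fst (cs ! n) else obs (snd (cs ! n)) p) else None)"

definition labels_ok :: "nat \<Rightarrow> tree \<Rightarrow> bool" where
  "labels_ok k T \<longleftrightarrow> (\<forall>p l. obs T p = Some l \<longrightarrow> l \<in> {1..k})"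

definition trans :: "nat \<Rightarrow> real \<Rightarrow> nat \<Rightarrow> nat \<Rightarrow> real" where
  "trans k \<theta> a b = (if a = b then \<theta> + (1 - \<theta>) / k else (1 - \<theta>) / k)"

definition labelings :: "nat \<Rightarrow> nat \<Rightarrow> tree \<Rightarrow> (nat list \<Rightarrow> nat) set" where
  "labelings k t T = PiE (verts t T) (\<lambda>_. {1..k})"

text \<open>Joint probability of a full labeling: uniform prior at the root times
  the broadcast transitions along every edge.\<close>
definition weight :: "nat \<Rightarrow> real \<Rightarrow> nat \<Rightarrow> tree \<Rightarrow> (nat list \<Rightarrow> nat) \<Rightarrow> real" where
  "weight k \<theta> t T \<sigma> = (1 / real k) *
     (\<Prod>p \<in> verts t T - {[]}. trans k \<theta> (\<sigma> (butlast p)) (\<sigma> p))"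

definition consistent :: "nat \<Rightarrow> tree \<Rightarrow> (nat list \<Rightarrow> nat) \<Rightarrow> bool" where
  "consistent t T \<sigma> \<longleftrightarrow> (\<forall>p \<in> verts t T. \<forall>l. obs T p = Some l \<longrightarrow> \<sigma> p = l)"

text \<open>X_t^(i): posterior probability that the root has label i given the revealed
  labels in the subtree of depth \<le> t.\<close>
definition X :: "nat \<Rightarrow> real \<Rightarrow> nat \<Rightarrow> tree \<Rightarrow> nat \<Rightarrow> real" where
  "X k \<theta> t T i =
     (\<Sum>\<sigma> \<in> {\<sigma> \<in> labelings k t T. consistent t T \<sigma> \<and> \<sigma> [] = i}. weight k \<theta> t T \<sigma>) /
     (\<Sum>\<sigma> \<in> {\<sigma> \<in> labelings k t T. consistent t T \<sigma>}. weight k \<theta> t T \<sigma>)"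

end

theory Submission
  imports Defs
begin

lemma verts_nil: "[] \<in> verts t T"
  by (cases t; cases T) auto

lemma verts_finite: "finite (verts t T)"
proof (induction t arbitrary: T)
  case 0 then show ?case by simp
next
  case (Suc t) then show ?case by (cases T) auto
qed

lemma verts_butlast: "q \<in> verts t T \<Longrightarrow> butlast q \<in> verts t T"
proof (induction t arbitrary: T q)
  case 0 then show ?case by simp
next
  case (Suc t)
  obtain cs where T: "T = Node cs" by (cases T)
  show ?case
  proof (cases q)
    case Nil then show ?thesis using Suc.prems by simp
  next
    case (Cons n q')
    with Suc.prems T have n: "n < length cs" and q': "q' \<in> verts t (snd (cs!n))" by auto
    show ?thesis
    proof (cases "q' = []")
      case True then show ?thesis using Cons T by simp
    next
      case False then show ?thesis using Cons T n Suc.IH[OF q'] by auto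
    qed
  qed
qed

lemma verts_Suc_Cons: "n < length cs \<Longrightarrow> (n # q \<in> verts (Suc t) (Node cs)) = (q \<in> verts t (snd (cs!n)))"
  by auto

lemma obs_Nil[simp]: "obs T [] = None"
  by (cases T) auto

lemma obs_Cons: "n < length cs \<Longrightarrow> obs (Node cs) (n#q) = (if q = [] then fst (cs!n) else obs (snd (cs!n)) q)"
  by simp

definition P :: "nat \<Rightarrow> real \<Rightarrow> nat \<Rightarrow> tree \<Rightarrow> (nat list \<Rightarrow> nat) \<Rightarrow> real" where
  "P k \<theta> t T \<sigma> = (\<Prod>p \<in> verts t T - {[]}. trans k \<theta> (\<sigma> (butlast p)) (\<sigma> p))"

definition Lk :: "nat \<Rightarrow> real \<Rightarrow> nat \<Rightarrow> tree \<Rightarrow> nat \<Rightarrow> real" where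
  "Lk k \<theta> t T a = (\<Sum>\<sigma>\<in>labelings k t T. if consistent t T \<sigma> \<and> \<sigma> [] = a then P k \<theta> t T \<sigma> else 0)"

lemma prod_if_zero:
  assumes "finite I"
  shows "(\<Prod>n\<in>I. if A n then B n else (0::real)) = (if \<forall>n\<in>I. A n then prod B I else 0)"
  using assms by (induction I rule: finite_induct) auto

definition gmap :: "nat \<Rightarrow> tree \<Rightarrow> nat \<times> (nat \<Rightarrow> nat list \<Rightarrow> nat) \<Rightarrow> (nat list \<Rightarrow> nat)" where
  "gmap t T x = (\<lambda>p. if p = [] then fst x else if p \<in> verts t T then snd x (hd p) (tl p) else undefined)"

lemma gmap_bij:
  "bij_betw (gmap (Suc t) (Node cs))
     ({1..k} \<times> PiE {..<length cs} (\<lambda>n. labelings k t (snd (cs!n))))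
     (labelings k (Suc t) (Node cs))"
proof (rule bij_betw_byWitness[where f' = "\<lambda>\<sigma>. (\<sigma> [], restrict (\<lambda>n. restrict (\<lambda>q. \<sigma> (n#q)) (verts t (snd (cs!n)))) {..<length cs})"])
  show "\<forall>a\<in>{1..k} \<times> PiE {..<length cs} (\<lambda>n. labelings k t (snd (cs!n))).
    (gmap (Suc t) (Node cs) a [], restrict (\<lambda>n. restrict (\<lambda>q. gmap (Suc t) (Node cs) a (n#q)) (verts t (snd (cs!n)))) {..<length cs}) = a"
  proof
    fix x assume x: "x \<in> {1..k} \<times> PiE {..<length cs} (\<lambda>n. labelings k t (snd (cs!n)))"
    obtain a \<tau> where xe: "x = (a, \<tau>)" by (cases x)
    have "restrict (\<lambda>n. restrict (\<lambda>q. gmap (Suc t) (Node cs) x (n#q)) (verts t (snd (cs!n)))) {..<length cs} = \<tau>"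
    proof
      fix n show "restrict (\<lambda>n. restrict (\<lambda>q. gmap (Suc t) (Node cs) x (n#q)) (verts t (snd (cs!n)))) {..<length cs} n = \<tau> n"
      proof (cases "n < length cs")
        case True
        then have "\<tau> n \<in> labelings k t (snd (cs!n))" using x xe by auto
        then have "\<tau> n \<in> PiE (verts t (snd (cs!n))) (\<lambda>_. {1..k})" by (simp add: labelings_def)
        then show ?thesis using True xe by (auto simp: gmap_def fun_eq_iff PiE_def extensional_def)
      next
        case False then show ?thesis using x xe by (auto simp: PiE_def extensional_def)
      qed
    qed
    then show "(gmap (Suc t) (Node cs) x [], restrict (\<lambda>n. restrict (\<lambda>q. gmap (Suc t) (Node cs) x (n#q)) (verts t (snd (cs!n)))) {..<length cs}) = x"
      using xe by (simp add: gmap_def)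
  qed
next
  show "\<forall>\<sigma>\<in>labelings k (Suc t) (Node cs). gmap (Suc t) (Node cs) (\<sigma> [], restrict (\<lambda>n. restrict (\<lambda>q. \<sigma> (n#q)) (verts t (snd (cs!n)))) {..<length cs}) = \<sigma>"
  proof
    fix \<sigma> assume s: "\<sigma> \<in> labelings k (Suc t) (Node cs)"
    show "gmap (Suc t) (Node cs) (\<sigma> [], restrict (\<lambda>n. restrict (\<lambda>q. \<sigma> (n#q)) (verts t (snd (cs!n)))) {..<length cs}) = \<sigma>"
    proof
      fix p
      show "gmap (Suc t) (Node cs) (\<sigma> [], restrict (\<lambda>n. restrict (\<lambda>q. \<sigma> (n#q)) (verts t (snd (cs!n)))) {..<length cs}) p = \<sigma> p"
      proof (cases "p \<in> verts (Suc t) (Node cs)")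
        case True then show ?thesis by (cases p) (auto simp: gmap_def)
      next
        case False then show ?thesis using s by (auto simp: gmap_def labelings_def PiE_def extensional_def)
      qed
    qed
  qed
next
  show "(\<lambda>\<sigma>. (\<sigma> [], restrict (\<lambda>n. restrict (\<lambda>q. \<sigma> (n#q)) (verts t (snd (cs!n)))) {..<length cs})) ` labelings k (Suc t) (Node cs)
    \<subseteq> {1..k} \<times> PiE {..<length cs} (\<lambda>n. labelings k t (snd (cs!n)))"
  proof (clarsimp simp: labelings_def PiE_def Pi_def, intro conjI allI impI)
    fix x n q assume "x \<in> extensional (insert [] (\<Union>x<length cs. (#) x ` verts t (snd (cs ! x))))"
      and h: "\<forall>xa. (xa = [] \<longrightarrow> Suc 0 \<le> x [] \<and> x [] \<le> k) \<and>
              ((\<exists>x\<in>{..<length cs}. xa \<in> (#) x ` verts t (snd (cs ! x))) \<longrightarrow>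
               Suc 0 \<le> x xa \<and> x xa \<le> k)" and n: "n < length cs" and q: "q \<in> verts t (snd (cs ! n))"
    have "\<exists>x\<in>{..<length cs}. n # q \<in> (#) x ` verts t (snd (cs ! x))" using n q by auto
    then show "Suc 0 \<le> x (n # q)" "x (n # q) \<le> k" using h by blast+
  qed
next
  show "gmap (Suc t) (Node cs) ` ({1..k} \<times> PiE {..<length cs} (\<lambda>n. labelings k t (snd (cs!n)))) \<subseteq> labelings k (Suc t) (Node cs)"
    by (auto simp: labelings_def PiE_def Pi_def gmap_def extensional_def) (meson imageI lessThan_iff)+
qed

lemma verts_Suc_minus: "verts (Suc t) (Node cs) - {[]} = (\<Union>n\<in>{..<length cs}. Cons n ` verts t (snd (cs!n)))"
  by auto

lemma gmap_Cons: "n < length cs \<Longrightarrow> q \<in> verts t (snd (cs!n)) \<Longrightarrow> gmap (Suc t) (Node cs) x (n#q) = snd x n q"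
proof -
  assume a: "n < length cs" "q \<in> verts t (snd (cs!n))"
  then have m: "n#q \<in> verts (Suc t) (Node cs)" by (simp only: verts_Suc_Cons)
  show ?thesis unfolding gmap_def using m by (simp del: verts.simps)
qed

lemma gmap_Nil[simp]: "gmap t T x [] = fst x" by (simp add: gmap_def)

lemma P_gmap:
  "P k \<theta> (Suc t) (Node cs) (gmap (Suc t) (Node cs) x) =
     (\<Prod>n<length cs. trans k \<theta> (fst x) (snd x n []) * P k \<theta> t (snd (cs!n)) (snd x n))"
proof -
  let ?g = "gmap (Suc t) (Node cs) x"
  let ?f = "\<lambda>p. trans k \<theta> (?g (butlast p)) (?g p)"
  have "P k \<theta> (Suc t) (Node cs) ?g = prod ?f (\<Union>n\<in>{..<length cs}. Cons n ` verts t (snd (cs!n)))"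
    unfolding P_def verts_Suc_minus ..
  also have "\<dots> = (\<Prod>n<length cs. prod ?f (Cons n ` verts t (snd (cs!n))))"
    by (rule prod.UNION_disjoint) (auto simp: verts_finite)
  also have "\<dots> = (\<Prod>n<length cs. trans k \<theta> (fst x) (snd x n []) * P k \<theta> t (snd (cs!n)) (snd x n))"
  proof (rule prod.cong[OF refl])
    fix n assume n: "n \<in> {..<length cs}"
    let ?V = "verts t (snd (cs!n))"
    have "prod ?f (Cons n ` ?V) = (\<Prod>q\<in>?V. ?f (n#q))"
      by (subst prod.reindex) (auto simp: inj_on_def)
    also have "\<dots> = (\<Prod>q\<in>?V. if q = [] then trans k \<theta> (fst x) (snd x n []) else trans k \<theta> (snd x n (butlast q)) (snd x n q))"
    proof (rule prod.cong[OF refl])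
      fix q assume q: "q \<in> ?V"
      show "?f (n#q) = (if q = [] then trans k \<theta> (fst x) (snd x n []) else trans k \<theta> (snd x n (butlast q)) (snd x n q))"
      proof (cases "q = []")
        case True then show ?thesis using n q by (simp add: gmap_Cons)
      next
        case False
        have "butlast q \<in> ?V" using q verts_butlast by blast
        then show ?thesis using n q False by (simp add: gmap_Cons)
      qed
    qed
    also have "\<dots> = trans k \<theta> (fst x) (snd x n []) * (\<Prod>q\<in>?V - {[]}. trans k \<theta> (snd x n (butlast q)) (snd x n q))"
      by (subst prod.remove[of _ "[]"]) (auto simp: verts_finite verts_nil intro!: prod.cong)
    finally show "prod ?f (Cons n ` ?V) = trans k \<theta> (fst x) (snd x n []) * P k \<theta> t (snd (cs!n)) (snd x n)"
      by (simp add: P_def)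
  qed
  finally show ?thesis .
qed

lemma cons_gmap:
  "consistent (Suc t) (Node cs) (gmap (Suc t) (Node cs) x) \<longleftrightarrow>
     (\<forall>n<length cs. (\<forall>l. fst (cs!n) = Some l \<longrightarrow> snd x n [] = l) \<and> consistent t (snd (cs!n)) (snd x n))"
proof
  assume c: "consistent (Suc t) (Node cs) (gmap (Suc t) (Node cs) x)"
  show "\<forall>n<length cs. (\<forall>l. fst (cs!n) = Some l \<longrightarrow> snd x n [] = l) \<and> consistent t (snd (cs!n)) (snd x n)"
  proof (intro allI impI conjI)
    fix n l assume n: "n < length cs" and "fst (cs!n) = Some l"
    moreover have "[n] \<in> verts (Suc t) (Node cs)" using n verts_nil by auto
    ultimately show "snd x n [] = l" using c n unfolding consistent_def
      using verts_nil gmap_Cons by (metis obs_Cons)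
  next
    fix n assume n: "n < length cs"
    show "consistent t (snd (cs!n)) (snd x n)"
      unfolding consistent_def
    proof (intro ballI allI impI)
      fix q l assume q: "q \<in> verts t (snd (cs!n))" and o: "obs (snd (cs!n)) q = Some l"
      then have qn: "q \<noteq> []" by auto
      have "n#q \<in> verts (Suc t) (Node cs)" using n q by auto
      moreover have "obs (Node cs) (n#q) = Some l" using n qn o by simp
      ultimately have "gmap (Suc t) (Node cs) x (n#q) = l" using c unfolding consistent_def by blast
      then show "snd x n q = l" using n q by (simp add: gmap_Cons)
    qed
  qed
next
  assume h: "\<forall>n<length cs. (\<forall>l. fst (cs!n) = Some l \<longrightarrow> snd x n [] = l) \<and> consistent t (snd (cs!n)) (snd x n)"
  show "consistent (Suc t) (Node cs) (gmap (Suc t) (Node cs) x)"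
    unfolding consistent_def
  proof (intro ballI allI impI)
    fix p l assume p: "p \<in> verts (Suc t) (Node cs)" and o: "obs (Node cs) p = Some l"
    then obtain n q where pe: "p = n#q" and n: "n < length cs" and q: "q \<in> verts t (snd (cs!n))"
      by (cases p) auto
    show "gmap (Suc t) (Node cs) x p = l"
    proof (cases "q = []")
      case True then show ?thesis using h n o pe p q by (simp add: gmap_Cons)
    next
      case False then show ?thesis using h n o pe p q by (simp add: gmap_Cons consistent_def)
    qed
  qed
qed

lemma labelings_finite: "finite (labelings k t T)"
  unfolding labelings_def by (rule finite_PiE) (auto simp: verts_finite)

lemma labelings_root: "\<sigma> \<in> labelings k t T \<Longrightarrow> \<sigma> [] \<in> {1..k}"
  unfolding labelings_def using verts_nil by blast

lemma factor_sum:
  "(\<Sum>\<tau>\<in>labelings k t T'. if (\<forall>l. c = Some l \<longrightarrow> \<tau> [] = l) \<and> consistent t T' \<tau> then trans k \<theta> a (\<tau> []) * P k \<theta> t T' \<tau> else 0)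
   = (\<Sum>b\<in>{1..k}. if (\<forall>l. c = Some l \<longrightarrow> b = l) then trans k \<theta> a b * Lk k \<theta> t T' b else 0)"
proof -
  have "(\<Sum>b\<in>{1..k}. if (\<forall>l. c = Some l \<longrightarrow> b = l) then trans k \<theta> a b * Lk k \<theta> t T' b else 0)
     = (\<Sum>b\<in>{1..k}. \<Sum>\<tau>\<in>labelings k t T'. if \<tau> [] = b then (if (\<forall>l. c = Some l \<longrightarrow> \<tau> [] = l) \<and> consistent t T' \<tau> then trans k \<theta> a (\<tau> []) * P k \<theta> t T' \<tau> else 0) else 0)"
    unfolding Lk_def by (rule sum.cong[OF refl]) (auto simp: sum_distrib_left intro!: sum.cong sum.neutral)
  also have "\<dots> = (\<Sum>\<tau>\<in>labelings k t T'. \<Sum>b\<in>{1..k}. if \<tau> [] = b then (if (\<forall>l. c = Some l \<longrightarrow> \<tau> [] = l) \<and> consistent t T' \<tau> then trans k \<theta> a (\<tau> []) * P k \<theta> t T' \<tau> else 0) else 0)"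
    by (rule sum.swap)
  also have "\<dots> = (\<Sum>\<tau>\<in>labelings k t T'. if (\<forall>l. c = Some l \<longrightarrow> \<tau> [] = l) \<and> consistent t T' \<tau> then trans k \<theta> a (\<tau> []) * P k \<theta> t T' \<tau> else 0)"
    by (rule sum.cong[OF refl], drule labelings_root, simp add: sum.delta)
  finally show ?thesis by simp
qed

lemma sum_if_const: "(\<Sum>x\<in>S. if c then f x else (0::real)) = (if c then sum f S else 0)"
  by simp

lemma Lk_Suc:
  "Lk k \<theta> (Suc t) (Node cs) a = (if a \<in> {1..k} then
     (\<Prod>n<length cs. \<Sum>b\<in>{1..k}. if (\<forall>l. fst (cs!n) = Some l \<longrightarrow> b = l) then trans k \<theta> a b * Lk k \<theta> t (snd (cs!n)) b else 0)
     else 0)"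
proof -
  let ?Tg = "{1..k} \<times> PiE {..<length cs} (\<lambda>n. labelings k t (snd (cs!n)))"
  let ?h = "\<lambda>\<sigma>. if consistent (Suc t) (Node cs) \<sigma> \<and> \<sigma> [] = a then P k \<theta> (Suc t) (Node cs) \<sigma> else 0"
  let ?G = "\<lambda>n \<tau>. if (\<forall>l. fst (cs!n) = Some l \<longrightarrow> \<tau> [] = l) \<and> consistent t (snd (cs!n)) \<tau> then trans k \<theta> a (\<tau> []) * P k \<theta> t (snd (cs!n)) \<tau> else 0"
  have "Lk k \<theta> (Suc t) (Node cs) a = (\<Sum>x\<in>?Tg. ?h (gmap (Suc t) (Node cs) x))"
    unfolding Lk_def by (rule sum.reindex_bij_betw[OF gmap_bij, symmetric])
  also have "\<dots> = (\<Sum>x\<in>?Tg. if fst x = a then (\<Prod>n<length cs. ?G n (snd x n)) else 0)"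
  proof (rule sum.cong[OF refl])
    fix x :: "nat \<times> (nat \<Rightarrow> nat list \<Rightarrow> nat)"
    show "?h (gmap (Suc t) (Node cs) x) = (if fst x = a then (\<Prod>n<length cs. ?G n (snd x n)) else 0)"
    proof -
      have e1: "?h (gmap (Suc t) (Node cs) x) = (if fst x = a \<and> (\<forall>n\<in>{..<length cs}. (\<forall>l. fst (cs!n) = Some l \<longrightarrow> snd x n [] = l) \<and> consistent t (snd (cs!n)) (snd x n))
          then (\<Prod>n<length cs. trans k \<theta> (fst x) (snd x n []) * P k \<theta> t (snd (cs!n)) (snd x n)) else 0)"
        by (simp only: cons_gmap P_gmap gmap_Nil lessThan_iff Ball_def) auto
      have e2: "(\<Prod>n<length cs. ?G n (snd x n)) = (if (\<forall>n\<in>{..<length cs}. (\<forall>l. fst (cs!n) = Some l \<longrightarrow> snd x n [] = l) \<and> consistent t (snd (cs!n)) (snd x n))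
          then (\<Prod>n<length cs. trans k \<theta> a (snd x n []) * P k \<theta> t (snd (cs!n)) (snd x n)) else 0)"
        by (rule prod_if_zero) simp
      show ?thesis using e1 e2 by auto
    qed
  qed
  also have "\<dots> = (\<Sum>a'\<in>{1..k}. \<Sum>\<tau>\<in>PiE {..<length cs} (\<lambda>n. labelings k t (snd (cs!n))). if a' = a then (\<Prod>n<length cs. ?G n (\<tau> n)) else 0)"
    by (subst sum.cartesian_product) (simp add: case_prod_beta)
  also have "\<dots> = (if a \<in> {1..k} then (\<Sum>\<tau>\<in>PiE {..<length cs} (\<lambda>n. labelings k t (snd (cs!n))). \<Prod>n<length cs. ?G n (\<tau> n)) else 0)"
    by (simp only: sum_if_const) (simp add: sum.delta)
  also have "\<dots> = (if a \<in> {1..k} then (\<Prod>n<length cs. \<Sum>\<tau>\<in>labelings k t (snd (cs!n)). ?G n \<tau>) else 0)"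
    by (subst prod_sum_PiE) (auto simp: labelings_finite)
  also have "\<dots> = (if a \<in> {1..k} then
     (\<Prod>n<length cs. \<Sum>b\<in>{1..k}. if (\<forall>l. fst (cs!n) = Some l \<longrightarrow> b = l) then trans k \<theta> a b * Lk k \<theta> t (snd (cs!n)) b else 0)
     else 0)"
    by (simp add: factor_sum)
  finally show ?thesis .
qed

lemma P_0: "P k \<theta> 0 T \<sigma> = 1"
proof -
  have "verts 0 T - {[]} = {}" by simp
  then show ?thesis unfolding P_def by (simp only: prod.empty)
qed

lemma Lk_0: "Lk k \<theta> 0 T b = (if b \<in> {1..k} then 1 else 0)"
proof -
  have "Lk k \<theta> 0 T b = (\<Sum>\<sigma>\<in>PiE {[]} (\<lambda>_. {1..k}). \<Prod>x\<in>{[]}. (\<lambda>(x::nat list) y. if y = b then 1 else (0::real)) x (\<sigma> x))"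
    unfolding Lk_def labelings_def P_0 consistent_def by simp
  also have "\<dots> = (\<Prod>x\<in>{[]}. \<Sum>y\<in>{1..k}. (\<lambda>(x::nat list) y. if y = b then 1 else (0::real)) x y)"
    by (rule prod_sum_PiE[symmetric]) auto
  also have "\<dots> = (if b \<in> {1..k} then 1 else 0)" by (simp add: sum.delta')
  finally show ?thesis .
qed

lemma X_Lk:
  assumes "k > 0"
  shows "X k \<theta> t T i = Lk k \<theta> t T i / (\<Sum>b\<in>{1..k}. Lk k \<theta> t T b)"
proof -
  have num: "(\<Sum>\<sigma> \<in> {\<sigma> \<in> labelings k t T. consistent t T \<sigma> \<and> \<sigma> [] = i}. weight k \<theta> t T \<sigma>) = (1 / real k) * Lk k \<theta> t T i"
    by (simp add: sum.inter_filter labelings_finite Lk_def sum_distrib_left weight_def P_def if_distrib cong: if_cong)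
  have "(\<Sum>b\<in>{1..k}. Lk k \<theta> t T b) = (\<Sum>\<sigma>\<in>labelings k t T. \<Sum>b\<in>{1..k}. if consistent t T \<sigma> \<and> \<sigma> [] = b then P k \<theta> t T \<sigma> else 0)"
    unfolding Lk_def by (rule sum.swap)
  also have "\<dots> = (\<Sum>\<sigma>\<in>labelings k t T. if consistent t T \<sigma> then P k \<theta> t T \<sigma> else 0)"
  proof (rule sum.cong[OF refl])
    fix \<sigma> assume "\<sigma> \<in> labelings k t T"
    then have r: "\<sigma> [] \<in> {1..k}" by (rule labelings_root)
    have "(\<Sum>b\<in>{1..k}. if consistent t T \<sigma> \<and> \<sigma> [] = b then P k \<theta> t T \<sigma> else 0) =
          (\<Sum>b\<in>{1..k}. if b = \<sigma> [] then (if consistent t T \<sigma> then P k \<theta> t T \<sigma> else 0) else 0)"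
      by (rule sum.cong) auto
    then show "(\<Sum>b\<in>{1..k}. if consistent t T \<sigma> \<and> \<sigma> [] = b then P k \<theta> t T \<sigma> else 0) = (if consistent t T \<sigma> then P k \<theta> t T \<sigma> else 0)"
      using r by (simp add: sum.delta)
  qed
  finally have den: "(\<Sum>\<sigma> \<in> {\<sigma> \<in> labelings k t T. consistent t T \<sigma>}. weight k \<theta> t T \<sigma>) = (1 / real k) * (\<Sum>b\<in>{1..k}. Lk k \<theta> t T b)"
    by (simp add: sum.inter_filter labelings_finite sum_distrib_left weight_def P_def if_distrib cong: if_cong)
  show ?thesis unfolding X_def num den using assms by simp
qed

lemma labels_ok_child:
  assumes "labels_ok k (Node cs)" "n < length cs"
  shows "labels_ok k (snd (cs!n))" "fst (cs!n) = Some l \<Longrightarrow> l \<in> {1..k}"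
proof -
  show "labels_ok k (snd (cs!n))" unfolding labels_ok_def
  proof (intro allI impI)
    fix p l assume o: "obs (snd (cs!n)) p = Some l"
    then have "p \<noteq> []" by auto
    then have "obs (Node cs) (n#p) = Some l" using o assms(2) by simp
    then show "l \<in> {1..k}" using assms(1) unfolding labels_ok_def by blast
  qed
  show "fst (cs!n) = Some l \<Longrightarrow> l \<in> {1..k}"
  proof -
    assume "fst (cs!n) = Some l"
    then have "obs (Node cs) [n] = Some l" using assms(2) by simp
    then show "l \<in> {1..k}" using assms(1) unfolding labels_ok_def by blast
  qed
qed

lemma trans_alt: "trans k \<theta> a b = (1 - \<theta>) / k + (if a = b then \<theta> else 0)"
  by (simp add: trans_def)

lemma trans_pos: "0 < \<theta> \<Longrightarrow> \<theta> < 1 \<Longrightarrow> k > 0 \<Longrightarrow> trans k \<theta> a b > 0"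
  by (simp add: trans_alt add_pos_nonneg)

lemma sum_trans_L:
  assumes "a \<in> {1..k}"
  shows "(\<Sum>b\<in>{1..k}. trans k \<theta> a b * L b) = (1 - \<theta>) / k * sum L {1..k} + \<theta> * L a"
proof -
  have "(\<Sum>b\<in>{1..k}. trans k \<theta> a b * L b) = (\<Sum>b\<in>{1..k}. (1 - \<theta>) / k * L b + (if b = a then \<theta> * L b else 0))"
    by (rule sum.cong) (auto simp: trans_alt algebra_simps)
  also have "\<dots> = (1 - \<theta>) / k * sum L {1..k} + \<theta> * L a"
    using assms by (simp add: sum.distrib sum_distrib_left sum.delta)
  finally show ?thesis .
qed

definition fac :: "nat \<Rightarrow> real \<Rightarrow> nat \<Rightarrow> tree \<Rightarrow> nat option \<Rightarrow> nat \<Rightarrow> real" where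
  "fac k \<theta> t ch c a = (\<Sum>b\<in>{1..k}. if (\<forall>l. c = Some l \<longrightarrow> b = l) then trans k \<theta> a b * Lk k \<theta> t ch b else 0)"

lemma fac_None: "a \<in> {1..k} \<Longrightarrow> fac k \<theta> t ch None a = (1 - \<theta>) / k * (\<Sum>b\<in>{1..k}. Lk k \<theta> t ch b) + \<theta> * Lk k \<theta> t ch a"
  unfolding fac_def using sum_trans_L[of a k \<theta> "Lk k \<theta> t ch"] by simp

lemma fac_Some: "l \<in> {1..k} \<Longrightarrow> fac k \<theta> t ch (Some l) a = trans k \<theta> a l * Lk k \<theta> t ch l"
  unfolding fac_def by (simp add: sum.delta')

lemma Lk_Suc': "Lk k \<theta> (Suc t) (Node cs) a = (if a \<in> {1..k} then (\<Prod>n<length cs. fac k \<theta> t (snd (cs!n)) (fst (cs!n)) a) else 0)"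
  unfolding fac_def by (rule Lk_Suc)

lemma Lk_pos:
  assumes "0 < \<theta>" "\<theta> < 1" "k > 0" "labels_ok k T" "a \<in> {1..k}"
  shows "Lk k \<theta> t T a > 0"
  using assms(4,5)
proof (induction t arbitrary: T a)
  case 0 then show ?case by (simp add: Lk_0)
next
  case (Suc t)
  obtain cs where T: "T = Node cs" by (cases T)
  have fpos: "fac k \<theta> t (snd (cs!n)) (fst (cs!n)) a > 0" if n: "n < length cs" for n
  proof -
    have ok: "labels_ok k (snd (cs!n))" using labels_ok_child(1)[OF Suc.prems(1)[unfolded T] n] .
    show ?thesis
    proof (cases "fst (cs!n)")
      case None
      have "(\<Sum>b\<in>{1..k}. Lk k \<theta> t (snd (cs!n)) b) \<ge> 0"
        by (rule sum_nonneg) (simp add: less_imp_le Suc.IH[OF ok])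
      then show ?thesis using None fac_None[OF Suc.prems(2)] Suc.IH[OF ok Suc.prems(2)] assms(1,2)
        by (auto intro!: add_nonneg_pos)
    next
      case (Some l)
      have l: "l \<in> {1..k}" using labels_ok_child(2)[OF Suc.prems(1)[unfolded T] n Some] .
      show ?thesis using Some fac_Some[OF l] Suc.IH[OF ok l] trans_pos[OF assms(1,2,3)] by simp
    qed
  qed
  show ?case using Suc.prems(2) T by (simp add: Lk_Suc') (rule prod_pos, simp add: fpos)
qed

lemma fac_pos:
  assumes "0 < \<theta>" "\<theta> < 1" "k > 0" "labels_ok k (Node cs)" "n < length cs" "a \<in> {1..k}"
  shows "fac k \<theta> t (snd (cs!n)) (fst (cs!n)) a > 0"
proof -
  have ok: "labels_ok k (snd (cs!n))" using labels_ok_child(1)[OF assms(4,5)] .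
  show ?thesis
  proof (cases "fst (cs!n)")
    case None
    have "(\<Sum>b\<in>{1..k}. Lk k \<theta> t (snd (cs!n)) b) \<ge> 0"
      by (rule sum_nonneg) (simp add: less_imp_le Lk_pos[OF assms(1,2,3) ok])
    then show ?thesis using None fac_None[OF assms(6)] Lk_pos[OF assms(1,2,3) ok assms(6)] assms(1,2)
      by (auto intro!: add_nonneg_pos)
  next
    case (Some l)
    have l: "l \<in> {1..k}" using labels_ok_child(2)[OF assms(4,5) Some] .
    show ?thesis using Some fac_Some[OF l] Lk_pos[OF assms(1,2,3) ok l] trans_pos[OF assms(1,2,3)] by simp
  qed
qed

lemma ratio_prod:
  assumes "0 < \<theta>" "\<theta> < 1" "k > 0" "labels_ok k (Node cs)" "i \<in> {1..k}" "j \<in> {1..k}"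
  shows "X k \<theta> (Suc s) (Node cs) i / X k \<theta> (Suc s) (Node cs) j =
    (\<Prod>n<length cs. fac k \<theta> s (snd (cs!n)) (fst (cs!n)) i / fac k \<theta> s (snd (cs!n)) (fst (cs!n)) j)"
proof -
  let ?D = "\<Sum>b\<in>{1..k}. Lk k \<theta> (Suc s) (Node cs) b"
  have D: "?D > 0" using assms by (intro sum_pos) (auto intro: Lk_pos)
  have "X k \<theta> (Suc s) (Node cs) i / X k \<theta> (Suc s) (Node cs) j = Lk k \<theta> (Suc s) (Node cs) i / Lk k \<theta> (Suc s) (Node cs) j"
    using D assms(3) by (simp add: X_Lk)
  also have "\<dots> = (\<Prod>n<length cs. fac k \<theta> s (snd (cs!n)) (fst (cs!n)) i) / (\<Prod>n<length cs. fac k \<theta> s (snd (cs!n)) (fst (cs!n)) j)"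
    using assms(5,6) by (simp add: Lk_Suc')
  also have "\<dots> = (\<Prod>n<length cs. fac k \<theta> s (snd (cs!n)) (fst (cs!n)) i / fac k \<theta> s (snd (cs!n)) (fst (cs!n)) j)"
    by (rule prod_dividef[symmetric])
  finally show ?thesis .
qed

theorem lemma1:
  fixes k :: nat and \<theta> :: real and t :: nat and T :: tree and i j :: nat
  assumes "0 < \<theta>" "\<theta> < 1"
    and "labels_ok k T"
    and "i \<in> {1..k}" "j \<in> {1..k}" "i \<noteq> j"
    and "t \<ge> 2"
  shows "ln (X k \<theta> t T i / X k \<theta> t T j) =
           ln (X k \<theta> 1 T i / X k \<theta> 1 T j)
         + (\<Sum>n \<in> {n. n < length (children T) \<and> fst (children T ! n) = None}.
              ln ((1 + (k * \<theta> / (1 - \<theta>)) * X k \<theta> (t - 1) (snd (children T ! n)) i) /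
                  (1 + (k * \<theta> / (1 - \<theta>)) * X k \<theta> (t - 1) (snd (children T ! n)) j)))"
proof -
  obtain cs where T: "T = Node cs" by (cases T)
  obtain s where ts: "t = Suc s" using assms(7) by (cases t) auto
  have k: "k > 0" using assms(4) by auto
  have ok: "labels_ok k (Node cs)" using assms(3) T by simp
  let ?m = "length cs"
  let ?R = "\<lambda>n. fac k \<theta> s (snd (cs!n)) (fst (cs!n)) i / fac k \<theta> s (snd (cs!n)) (fst (cs!n)) j"
  let ?R1 = "\<lambda>n. fac k \<theta> 0 (snd (cs!n)) (fst (cs!n)) i / fac k \<theta> 0 (snd (cs!n)) (fst (cs!n)) j"
  let ?U = "{n. n < ?m \<and> fst (cs!n) = None}"
  let ?L = "{n. n < ?m \<and> fst (cs!n) \<noteq> None}"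
  let ?c = "real k * \<theta> / (1 - \<theta>)"
  have Rpos: "?R n > 0" "?R1 n > 0" if "n < ?m" for n
    using fac_pos[OF assms(1,2) k ok that] assms(4,5) by (auto intro: divide_pos_pos)
  have split: "{..<?m} = ?L \<union> ?U" "?L \<inter> ?U = {}" "finite ?L" "finite ?U" by auto
  have e1: "ln (X k \<theta> t T i / X k \<theta> t T j) = (\<Sum>n\<in>?L. ln (?R n)) + (\<Sum>n\<in>?U. ln (?R n))"
  proof -
    have "ln (X k \<theta> t T i / X k \<theta> t T j) = (\<Sum>n<?m. ln (?R n))"
      unfolding T ts ratio_prod[OF assms(1,2) k ok assms(4,5)]
    proof (rule ln_prod)
      fix n assume "n \<in> {..<?m}"
      then have "?R n > 0" using Rpos(1)[of n] by simp
      then show "?R n \<noteq> 0" by (metis less_irrefl)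
    qed simp
    also have "\<dots> = (\<Sum>n\<in>?L. ln (?R n)) + (\<Sum>n\<in>?U. ln (?R n))"
      unfolding split(1) by (rule sum.union_disjoint) auto
    finally show ?thesis .
  qed
  have e2: "ln (X k \<theta> 1 T i / X k \<theta> 1 T j) = (\<Sum>n\<in>?L. ln (?R n))"
  proof -
    have "ln (X k \<theta> 1 T i / X k \<theta> 1 T j) = (\<Sum>n<?m. ln (?R1 n))"
      unfolding T One_nat_def ratio_prod[OF assms(1,2) k ok assms(4,5)]
    proof (rule ln_prod)
      fix n assume "n \<in> {..<?m}"
      then have "?R1 n > 0" using Rpos(2)[of n] by simp
      then show "?R1 n \<noteq> 0" by (metis less_irrefl)
    qed simp
    also have "\<dots> = (\<Sum>n\<in>?L. ln (?R1 n)) + (\<Sum>n\<in>?U. ln (?R1 n))"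
      unfolding split(1) by (rule sum.union_disjoint) auto
    also have "(\<Sum>n\<in>?U. ln (?R1 n)) = 0"
    proof (rule sum.neutral, rule ballI)
      fix n assume "n \<in> ?U"
      then have "fst (cs!n) = None" by auto
      then have "fac k \<theta> 0 (snd (cs!n)) (fst (cs!n)) i = fac k \<theta> 0 (snd (cs!n)) (fst (cs!n)) j"
        using assms(4,5) by (simp add: fac_None Lk_0)
      then show "ln (?R1 n) = 0" using Rpos(2) \<open>n \<in> ?U\<close> by auto
    qed
    also have "(\<Sum>n\<in>?L. ln (?R1 n)) = (\<Sum>n\<in>?L. ln (?R n))"
    proof (rule sum.cong[OF refl])
      fix n assume n: "n \<in> ?L"
      then obtain l where l: "fst (cs!n) = Some l" by auto
      have lk: "l \<in> {1..k}" using labels_ok_child(2)[OF ok _ l] n by auto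
      have okc: "labels_ok k (snd (cs!n))" using labels_ok_child(1)[OF ok] n by auto
      have p: "Lk k \<theta> s (snd (cs!n)) l > 0" by (rule Lk_pos[OF assms(1,2) k okc lk])
      show "ln (?R1 n) = ln (?R n)" using p lk by (simp add: l fac_Some Lk_0)
    qed
    finally show ?thesis by simp
  qed
  have e3: "(\<Sum>n\<in>?U. ln (?R n)) = (\<Sum>n \<in> {n. n < length (children T) \<and> fst (children T ! n) = None}.
              ln ((1 + ?c * X k \<theta> (t - 1) (snd (children T ! n)) i) /
                  (1 + ?c * X k \<theta> (t - 1) (snd (children T ! n)) j)))"
    unfolding T ts children.simps diff_Suc_1
  proof (rule sum.cong[OF refl])
    fix n assume n: "n \<in> ?U"
    then have None: "fst (cs!n) = None" by auto
    have okc: "labels_ok k (snd (cs!n))" using labels_ok_child(1)[OF ok] n by auto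
    let ?S = "\<Sum>b\<in>{1..k}. Lk k \<theta> s (snd (cs!n)) b"
    have S: "?S > 0" using Lk_pos[OF assms(1,2) k okc] k by (intro sum_pos) auto
    have f: "fac k \<theta> s (snd (cs!n)) (fst (cs!n)) a = (1 - \<theta>) / k * ?S * (1 + ?c * X k \<theta> s (snd (cs!n)) a)"
      if a: "a \<in> {1..k}" for a
    proof -
      have "(1 - \<theta>) / k * ?S * (1 + ?c * X k \<theta> s (snd (cs!n)) a) = (1 - \<theta>) / k * ?S + \<theta> * Lk k \<theta> s (snd (cs!n)) a"
        using S k assms(2) by (simp add: X_Lk[OF k] field_simps)
      then show ?thesis using None fac_None[OF a] by simp
    qed
    have q: "(1 - \<theta>) / k * ?S > 0" using S k assms(2) by simp
    show "ln (?R n) = ln ((1 + ?c * X k \<theta> s (snd (cs!n)) i) / (1 + ?c * X k \<theta> s (snd (cs!n)) j))"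
    proof -
      have q0: "(1 - \<theta>) / k * ?S \<noteq> 0" using q by linarith
      show ?thesis by (simp only: f[OF assms(4)] f[OF assms(5)] mult_divide_mult_cancel_left[OF q0])
    qed
  qed
  show ?thesis using e1 e2 e3 by simp
qed

end
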